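(* Let $0<\beta<1$ and let $N_a = N_a(N) \in (0, N]$ satisfy $c_1 N^\beta \le N_a \le c_2 N^\beta$ for constants $0<c_1\le c_2$ and all large $N$. Consider the activity recognition problem over the OR many-access channel defined in the context. Then every feasible activity recognition cost $\Omega_a$ satisfies $\Omega_a \ge 1-\beta$, and every $\Omega_a > 1/\ln 2$ is feasible. In particular, the minimum (infimum) feasible activity recognition cost lies in $[1-\beta, 1/\ln 2]$.
   Context: There are $N$ users; user $n$ is active ($s_n = 1$) with probability $N_a/N$, independently of the others, and inactive ($s_n=0$) otherwise. An activity recognition scheme of length $L$ consists of signature arrays $\underline{x}_1,\dots,\underline{x}_N \in \{0,1\}^L$ and a decoder $g : \{0,1\}^L \to \{0,1\}^N$. Each active user transmits its signature array and each inactive user transmits the all-zero array; the receiver observes the componentwise Boolean OR $\underline{y} = \bigvee_{n: s_n = 1} \underline{x}_n$ (the all-zero array if no user is active) and outputs $\hat{\underline{s}} = g(\underline{y})$. A cost $\Omega_a$ is feasible if there exists a sequence (indexed by $N$) of such schemes of length $\Omega_a N_a \log_2 N$ (rounded to an integer) for which $\Pr[\hat{\underline{s}} = \underline{s}] \to 1$ as $N \to \infty$. *)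

theory Defs
  imports Complex_Main
begin

text \<open>Users are indexed by {0..<N}; array positions by {0..<L}.
  A signature array of user n is the set X n of positions carrying a 1 (positions
  outside {0..<L} are ignored).\<close>

definition or_output :: "nat \<Rightarrow> (nat \<Rightarrow> nat set) \<Rightarrow> nat set \<Rightarrow> nat set" where
  "or_output L X S = {l. l < L \<and> (\<exists>n\<in>S. l \<in> X n)}"

definition success_prob ::
  "nat \<Rightarrow> real \<Rightarrow> nat \<Rightarrow> (nat \<Rightarrow> nat set) \<Rightarrow> (nat set \<Rightarrow> nat set) \<Rightarrow> real" where
  "success_prob N p L X g =
     (\<Sum>S\<in>Pow {0..<N}. if g (or_output L X S) = S
                          then p ^ card S * (1 - p) ^ (N - card S) else 0)"

definition feasible_cost :: "(nat \<Rightarrow> real) \<Rightarrow> real \<Rightarrow> bool" where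
  "feasible_cost Na \<Omega> \<longleftrightarrow>
     (\<exists>(X :: nat \<Rightarrow> nat \<Rightarrow> nat set) (g :: nat \<Rightarrow> nat set \<Rightarrow> nat set).
        (\<lambda>N. success_prob N (Na N / real N) (nat (round (\<Omega> * Na N * log 2 (real N))))
                (X N) (g N)) \<longlonglongrightarrow> 1)"

end

theory Submission
  imports Defs "HOL-Library.FuncSet" "HOL-Real_Asymp.Real_Asymp"
begin


definition Pw :: "real \<Rightarrow> nat \<Rightarrow> nat set \<Rightarrow> real" where
  "Pw p N S = p ^ card S * (1 - p) ^ (N - card S)"

lemma gen_fun:
  "(\<Sum>S\<in>Pow {0..<N}. Pw p N S * t ^ card S) = (p * t + (1 - p)) ^ N"
proof -
  have "(p * t + (1 - p)) ^ N = (\<Prod>x\<in>{0..<N}. p * t + (1 - p))" by simp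
  also have "\<dots> = (\<Sum>X\<in>Pow {0..<N}. (\<Prod>x\<in>X. p * t) * (\<Prod>x\<in>{0..<N}-X. (1 - p)))"
    by (rule prod_add) simp
  also have "\<dots> = (\<Sum>S\<in>Pow {0..<N}. Pw p N S * t ^ card S)"
  proof (rule sum.cong)
    fix X assume "X \<in> Pow {0..<N}"
    hence "X \<subseteq> {0..<N}" by auto
    hence "card ({0..<N} - X) = N - card X"
      by (simp add: card_Diff_subset finite_subset)
    thus "(\<Prod>x\<in>X. p * t) * (\<Prod>x\<in>{0..<N}-X. (1 - p)) = Pw p N X * t ^ card X"
      by (simp add: Pw_def power_mult_distrib)
  qed simp
  finally show ?thesis by simp
qed

lemma Pw_sum1: "(\<Sum>S\<in>Pow {0..<N}. Pw p N S) = 1"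
  using gen_fun[of p N 1] by simp

lemma Pw_nonneg: "0 \<le> p \<Longrightarrow> p \<le> 1 \<Longrightarrow> 0 \<le> Pw p N S"
  by (simp add: Pw_def)

lemma success_prob_Pw:
  "success_prob N p L X g = (\<Sum>S\<in>Pow {0..<N}. if g (or_output L X S) = S then Pw p N S else 0)"
  unfolding success_prob_def Pw_def by simp

lemma block_count:
  fixes S :: "nat set"
  assumes S: "S \<subseteq> {0..<N}" and i: "i < N" "i \<notin> S" and m: "m \<ge> 1"
  shows "(\<Sum>h\<in>PiE {0..<N} (\<lambda>_. {0..<m}). if h i \<in> h ` S then 1 else 0 :: real)
     = real m ^ N * (1 - (1 - 1 / real m) ^ card S)"
proof -
  let ?H = "PiE {0..<N} (\<lambda>_. {0..<m})"
  define G where "G v n x = (if n = i then (if x = v then 1 else 0) else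
                   if n \<in> S then (if x \<noteq> v then 1 else 0) else (1::real))" for v n x :: nat
  have fin: "finite ?H" by (simp add: finite_PiE)
  have ind: "(if h i \<in> h ` S then 0 else 1) = (\<Sum>v<m. \<Prod>n\<in>{0..<N}. G v n (h n))"
    if h: "h \<in> ?H" for h
  proof -
    have hi: "h i < m" using h i by auto
    have z: "(\<Prod>n\<in>{0..<N}. G v n (h n)) = 0" if "v \<noteq> h i" for v
    proof -
      have "G v i (h i) = 0" using that by (simp add: G_def)
      thus ?thesis using i by (intro prod_zero) auto
    qed
    have "(\<Sum>v<m. \<Prod>n\<in>{0..<N}. G v n (h n)) = (\<Prod>n\<in>{0..<N}. G (h i) n (h n))
          + (\<Sum>v\<in>{..<m}-{h i}. \<Prod>n\<in>{0..<N}. G v n (h n))"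
      using hi by (intro sum.remove) auto
    also have "(\<Sum>v\<in>{..<m}-{h i}. \<Prod>n\<in>{0..<N}. G v n (h n)) = 0"
      using z by (intro sum.neutral) auto
    finally have "(\<Sum>v<m. \<Prod>n\<in>{0..<N}. G v n (h n)) = (\<Prod>n\<in>{0..<N}. G (h i) n (h n))" by simp
    also have "\<dots> = (if h i \<in> h ` S then 0 else 1)"
    proof (cases "h i \<in> h ` S")
      case True
      then obtain j where j: "j \<in> S" "h j = h i" by auto
      have "G (h i) j (h j) = 0" using j i by (auto simp: G_def)
      moreover have "j \<in> {0..<N}" using j S by auto
      ultimately have "(\<Prod>n\<in>{0..<N}. G (h i) n (h n)) = 0" by (intro prod_zero) auto
      then show ?thesis using True by simp
    next
      case False
      have "\<forall>n\<in>{0..<N}. G (h i) n (h n) = 1" using False by (auto simp: G_def image_iff)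
      then show ?thesis using False by simp
    qed
    finally show ?thesis by simp
  qed
  have cnt: "(\<Sum>h\<in>?H. \<Prod>n\<in>{0..<N}. G v n (h n)) = real (m - 1) ^ card S * real m ^ (N - card S - 1)"
    if v: "v < m" for v
  proof -
    have "(\<Sum>h\<in>?H. \<Prod>n\<in>{0..<N}. G v n (h n)) = (\<Prod>n\<in>{0..<N}. \<Sum>x\<in>{0..<m}. G v n x)"
      by (rule prod_sum_PiE[symmetric]) auto
    also have "\<dots> = (\<Prod>n\<in>{0..<N}. if n = i then 1 else if n \<in> S then real (m - 1) else real m)"
    proof (rule prod.cong)
      fix n assume "n \<in> {0..<N}"
      have a: "(\<Sum>x\<in>{0..<m}. if x = v then 1 else 0 :: real) = 1" using v by simp
      have b: "(\<Sum>x\<in>{0..<m}. if x \<noteq> v then 1 else 0 :: real) = real (m - 1)"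
      proof -
        have "(\<Sum>x\<in>{0..<m}. if x \<noteq> v then 1 else 0 :: real) = real (card ({0..<m} - {v}))"
          by (simp add: sum.If_cases Int_def set_diff_eq)
        thus ?thesis using v by simp
      qed
      show "(\<Sum>x\<in>{0..<m}. G v n x) = (if n = i then 1 else if n \<in> S then real (m - 1) else real m)"
        using a b by (simp add: G_def)
    qed simp
    also have "\<dots> = (\<Prod>n\<in>S. real (m - 1)) * (\<Prod>n\<in>{0..<N} - S - {i}. real m)"
    proof -
      have fS: "finite S" using S finite_subset by blast
      have e: "{0..<N} = insert i (S \<union> ({0..<N} - S - {i}))" using S i by auto
      have "(\<Prod>n\<in>{0..<N}. if n = i then 1 else if n \<in> S then real (m - 1) else real m)
          = (\<Prod>n\<in>insert i (S \<union> ({0..<N} - S - {i})). if n = i then 1 else if n \<in> S then real (m - 1) else real m)"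
        using e by simp
      also have "\<dots> = (\<Prod>n\<in>S \<union> ({0..<N} - S - {i}). if n = i then 1 else if n \<in> S then real (m - 1) else real m)"
        using i fS by (subst prod.insert) auto
      also have "\<dots> = (\<Prod>n\<in>S. if n = i then 1 else if n \<in> S then real (m - 1) else real m)
            * (\<Prod>n\<in>{0..<N} - S - {i}. if n = i then 1 else if n \<in> S then real (m - 1) else real m)"
        using fS by (subst prod.union_disjoint) auto
      also have "\<dots> = (\<Prod>n\<in>S. real (m - 1)) * (\<Prod>n\<in>{0..<N} - S - {i}. real m)"
        using i by (intro arg_cong2[where f="(*)"] prod.cong) auto
      finally show ?thesis .
    qed
    also have "\<dots> = real (m - 1) ^ card S * real m ^ (N - card S - 1)"
    proof -
      have fS: "finite S" using S finite_subset by blast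
      have "card ({0..<N} - S - {i}) = N - card S - 1"
        using S i fS by (simp add: card_Diff_subset card_Diff_singleton_if)
      thus ?thesis by simp
    qed
    finally show ?thesis .
  qed
  have cS: "card S < N"
  proof -
    have "S \<subseteq> {0..<N} - {i}" using S i by auto
    hence "card S \<le> card ({0..<N} - {i})" by (intro card_mono) auto
    thus ?thesis using i by simp
  qed
  have "(\<Sum>h\<in>?H. if h i \<in> h ` S then 0 else 1 :: real) = (\<Sum>h\<in>?H. \<Sum>v<m. \<Prod>n\<in>{0..<N}. G v n (h n))"
    using ind by (intro sum.cong) auto
  also have "\<dots> = (\<Sum>v<m. \<Sum>h\<in>?H. \<Prod>n\<in>{0..<N}. G v n (h n))" by (rule sum.swap)
  also have "\<dots> = real m * (real (m - 1) ^ card S * real m ^ (N - card S - 1))"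
    using cnt m by (simp add: of_nat_diff)
  also have "\<dots> = real m ^ N * (1 - 1 / real m) ^ card S"
  proof -
    have "real m ^ N = real m ^ (N - card S - 1) * real m * real m ^ card S"
    proof -
      have "N = (N - card S - 1) + 1 + card S" using cS by simp
      hence "real m ^ N = real m ^ ((N - card S - 1) + 1 + card S)" by simp
      thus ?thesis by (simp only: power_add power_one_right)
    qed
    moreover have "(1 - 1 / real m) ^ card S * real m ^ card S = real (m - 1) ^ card S"
      using m by (simp flip: power_mult_distrib add: field_simps of_nat_diff)
    ultimately show ?thesis by (simp add: algebra_simps)
  qed
  finally have c0: "(\<Sum>h\<in>?H. if h i \<in> h ` S then 0 else 1 :: real) = real m ^ N * (1 - 1 / real m) ^ card S" .
  have tot: "(\<Sum>h\<in>?H. (if h i \<in> h ` S then 1 else 0 :: real) + (if h i \<in> h ` S then 0 else 1)) = real m ^ N"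
  proof -
    have "(\<Sum>h\<in>?H. (if h i \<in> h ` S then 1 else 0 :: real) + (if h i \<in> h ` S then 0 else 1)) = (\<Sum>h\<in>?H. 1)"
      by (intro sum.cong) auto
    also have "\<dots> = real (card ?H)" by simp
    also have "\<dots> = real m ^ N" by (simp add: card_PiE)
    finally show ?thesis .
  qed
  show ?thesis using tot c0 by (simp add: sum.distrib algebra_simps)
qed

lemma averaging:
  fixes f :: "'a \<Rightarrow> real"
  assumes "finite D" "D \<noteq> {}" "(\<Sum>d\<in>D. f d) \<le> real (card D) * B"
  shows "\<exists>d\<in>D. f d \<le> B"
proof (rule ccontr)
  assume "\<not> ?thesis"
  hence "\<forall>d\<in>D. B < f d" by auto
  hence "(\<Sum>d\<in>D. B) < (\<Sum>d\<in>D. f d)" using assms by (intro sum_strict_mono) auto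
  thus False using assms by simp
qed

definition XX :: "nat \<Rightarrow> nat \<Rightarrow> (nat \<Rightarrow> nat \<Rightarrow> nat) \<Rightarrow> nat \<Rightarrow> nat set" where
  "XX m w d n = {b * m + d b n | b. b < w}"

definition GG :: "nat \<Rightarrow> nat \<Rightarrow> nat \<Rightarrow> (nat \<Rightarrow> nat \<Rightarrow> nat) \<Rightarrow> nat set \<Rightarrow> nat set" where
  "GG N m w d y = {n\<in>{0..<N}. XX m w d n \<subseteq> y}"

lemma fail_bound:
  assumes d: "d \<in> PiE {0..<w} (\<lambda>b. PiE {0..<N} (\<lambda>_. {0..<m}))"
    and S: "S \<subseteq> {0..<N}" and mw: "m * w \<le> L"
  shows "(if GG N m w d (or_output L (XX m w d) S) = S then 0 else 1 :: real)
     \<le> (\<Sum>i\<in>{0..<N}-S. \<Prod>b<w. if d b i \<in> d b ` S then 1 else 0)"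
proof (cases "GG N m w d (or_output L (XX m w d) S) = S")
  case True
  then show ?thesis by (simp add: sum_nonneg prod_nonneg)
next
  case False
  have dlt: "d b n < m" if "b < w" "n < N" for b n
  proof -
    have "d b \<in> PiE {0..<N} (\<lambda>_. {0..<m})" using d that by (auto simp: PiE_iff)
    thus ?thesis using that by (auto simp: PiE_iff)
  qed
  have oo: "or_output L (XX m w d) S = (\<Union>n\<in>S. XX m w d n)"
  proof -
    have "b * m + d b n < L" if "b < w" "n \<in> S" for b n
    proof -
      have "d b n < m" using dlt that S by auto
      hence "b * m + d b n < b * m + m" by simp
      also have "\<dots> = (b + 1) * m" by simp
      also have "\<dots> \<le> w * m" using that by (intro mult_right_mono) auto
      finally show ?thesis using mw by (simp add: mult.commute)
    qed
    thus ?thesis unfolding or_output_def XX_def by auto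
  qed
  have "S \<subseteq> GG N m w d (or_output L (XX m w d) S)"
    using S unfolding oo GG_def by auto
  with False obtain i where i: "i \<in> GG N m w d (or_output L (XX m w d) S)" "i \<notin> S" by auto
  hence iN: "i \<in> {0..<N}" and sub: "XX m w d i \<subseteq> (\<Union>n\<in>S. XX m w d n)"
    unfolding GG_def oo by auto
  have cov: "d b i \<in> d b ` S" if b: "b < w" for b
  proof -
    have "b * m + d b i \<in> XX m w d i" unfolding XX_def using b by auto
    with sub obtain j b' where j: "j \<in> S" "b' < w" "b * m + d b i = b' * m + d b' j"
      unfolding XX_def by auto
    have l1: "d b i < m" using dlt b iN by auto
    have l2: "d b' j < m" using dlt j S by auto
    have "(b * m + d b i) div m = b" using l1 by simp
    moreover have "(b' * m + d b' j) div m = b'" using l2 by simp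
    ultimately have "b = b'" using j by simp
    thus ?thesis using j by auto
  qed
  have "(\<Prod>b<w. if d b i \<in> d b ` S then 1 else 0 :: real) = 1" using cov by simp
  moreover have "(\<Prod>b<w. if d b i \<in> d b ` S then 1 else 0 :: real)
      \<le> (\<Sum>i\<in>{0..<N}-S. \<Prod>b<w. if d b i \<in> d b ` S then 1 else 0)"
    using iN i by (intro member_le_sum) (auto intro: prod_nonneg)
  ultimately show ?thesis using False by simp
qed

lemma exists_design:
  assumes p: "0 \<le> p" "p \<le> 1" and m: "1 \<le> m" and mw: "m * w \<le> L"
  shows "\<exists>X g. 1 - success_prob N p L X g
            \<le> real N * (\<Sum>S\<in>Pow {0..<N}. Pw p N S * (1 - (1 - 1 / real m) ^ card S) ^ w)"
proof -
  define D where "D = PiE {0..<w} (\<lambda>b. PiE {0..<N} (\<lambda>_. {0..<m}))"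
  define B where "B = real N * (\<Sum>S\<in>Pow {0..<N}. Pw p N S * (1 - (1 - 1 / real m) ^ card S) ^ w)"
  define I where "I d S = (if GG N m w d (or_output L (XX m w d) S) = S then 0 else 1 :: real)" for d S
  define F where "F d = 1 - success_prob N p L (XX m w d) (GG N m w d)" for d
  have finD: "finite D" unfolding D_def by (intro finite_PiE) (auto intro: finite_PiE)
  have cardD: "card D = (m ^ N) ^ w" unfolding D_def by (simp add: card_PiE)
  have Dne: "D \<noteq> {}" using cardD m by auto
  have F_eq: "F d = (\<Sum>S\<in>Pow {0..<N}. Pw p N S * I d S)" for d
  proof -
    have "F d = (\<Sum>S\<in>Pow {0..<N}. Pw p N S) - (\<Sum>S\<in>Pow {0..<N}. if GG N m w d (or_output L (XX m w d) S) = S then Pw p N S else 0)"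
      unfolding F_def Pw_sum1 success_prob_Pw ..
    also have "\<dots> = (\<Sum>S\<in>Pow {0..<N}. Pw p N S * I d S)"
      unfolding I_def by (simp add: sum_subtractf[symmetric]) (intro sum.cong, auto)
    finally show ?thesis .
  qed
  define Q where "Q S i d = (\<Prod>b<w. if d b i \<in> d b ` S then 1 else 0 :: real)" for S :: "nat set" and i :: nat and d :: "nat \<Rightarrow> nat \<Rightarrow> nat"
  have Qsum: "(\<Sum>d\<in>D. Q S i d) = (real m ^ N * (1 - (1 - 1 / real m) ^ card S)) ^ w"
    if S: "S \<subseteq> {0..<N}" and i: "i \<in> {0..<N} - S" for S i
  proof -
    have "(\<Sum>d\<in>D. Q S i d) = (\<Prod>b\<in>{0..<w}. \<Sum>h\<in>PiE {0..<N} (\<lambda>_. {0..<m}). if h i \<in> h ` S then 1 else 0 :: real)"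
      unfolding D_def Q_def lessThan_atLeast0
      by (rule prod_sum_PiE[symmetric]) (auto intro: finite_PiE)
    also have "\<dots> = (\<Prod>b\<in>{0..<w}. real m ^ N * (1 - (1 - 1 / real m) ^ card S))"
      using block_count[OF S _ _ m] i by simp
    finally show ?thesis by simp
  qed
  have "(\<Sum>d\<in>D. F d) = (\<Sum>S\<in>Pow {0..<N}. Pw p N S * (\<Sum>d\<in>D. I d S))"
    unfolding F_eq by (simp add: sum_distrib_left) (rule sum.swap)
  also have "\<dots> \<le> (\<Sum>S\<in>Pow {0..<N}. Pw p N S * (\<Sum>d\<in>D. \<Sum>i\<in>{0..<N}-S. Q S i d))"
  proof (rule sum_mono)
    fix S assume "S \<in> Pow {0..<N}"
    hence "(\<Sum>d\<in>D. I d S) \<le> (\<Sum>d\<in>D. \<Sum>i\<in>{0..<N}-S. Q S i d)"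
      unfolding I_def Q_def using fail_bound[OF _ _ mw] by (intro sum_mono) (auto simp: D_def)
    thus "Pw p N S * (\<Sum>d\<in>D. I d S) \<le> Pw p N S * (\<Sum>d\<in>D. \<Sum>i\<in>{0..<N}-S. Q S i d)"
      by (intro mult_left_mono Pw_nonneg p)
  qed
  also have "\<dots> = (\<Sum>S\<in>Pow {0..<N}. Pw p N S * (\<Sum>i\<in>{0..<N}-S. (real m ^ N * (1 - (1 - 1 / real m) ^ card S)) ^ w))"
  proof (intro sum.cong refl arg_cong2[where f="(*)"])
    fix S assume S: "S \<in> Pow {0..<N}"
    show "(\<Sum>d\<in>D. \<Sum>i\<in>{0..<N}-S. Q S i d) = (\<Sum>i\<in>{0..<N}-S. (real m ^ N * (1 - (1 - 1 / real m) ^ card S)) ^ w)"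
      by (subst sum.swap) (intro sum.cong refl Qsum, use S in auto)
  qed
  also have "\<dots> \<le> (\<Sum>S\<in>Pow {0..<N}. Pw p N S * (real N * (real m ^ N * (1 - (1 - 1 / real m) ^ card S)) ^ w))"
  proof (rule sum_mono)
    fix S assume S: "S \<in> Pow {0..<N}"
    have nn: "0 \<le> (real m ^ N * (1 - (1 - 1 / real m) ^ card S)) ^ w"
    proof -
      have "(1 - 1 / real m) ^ card S \<le> 1" using m by (intro power_le_one) auto
      thus ?thesis by simp
    qed
    have "card ({0..<N} - S) \<le> N" using card_mono[of "{0..<N}" "{0..<N} - S"] by auto
    hence "(\<Sum>i\<in>{0..<N}-S. (real m ^ N * (1 - (1 - 1 / real m) ^ card S)) ^ w)
          \<le> real N * (real m ^ N * (1 - (1 - 1 / real m) ^ card S)) ^ w"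
      using nn by (simp add: mult_right_mono)
    thus "Pw p N S * (\<Sum>i\<in>{0..<N}-S. (real m ^ N * (1 - (1 - 1 / real m) ^ card S)) ^ w)
          \<le> Pw p N S * (real N * (real m ^ N * (1 - (1 - 1 / real m) ^ card S)) ^ w)"
      by (intro mult_left_mono Pw_nonneg p)
  qed
  also have "\<dots> = real (card D) * B"
    unfolding B_def cardD by (simp add: sum_distrib_left power_mult_distrib[symmetric] mult.assoc mult.left_commute)
  finally obtain d where "d \<in> D" "F d \<le> B" using averaging[OF finD Dne] by blast
  thus ?thesis unfolding F_def B_def by blast
qed

lemma converse_bound:
  assumes p: "0 < p" "p \<le> 1" and t: "0 < t" "t \<le> 1" and K: "0 \<le> K"
  shows "success_prob N p L X g \<le> (p * t + (1 - p)) ^ N / t powr K + 2 ^ L * p powr K"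
proof -
  define A where "A = {S\<in>Pow {0..<N}. g (or_output L X S) = S}"
  define A2 where "A2 = {S\<in>A. K \<le> real (card S)}"
  have finA: "finite A" unfolding A_def by auto
  have cardA: "card A \<le> 2 ^ L"
  proof -
    have "inj_on (or_output L X) A" unfolding A_def by (rule inj_onI) (metis (mono_tags) mem_Collect_eq)
    moreover have "or_output L X ` A \<subseteq> Pow {0..<L}" unfolding or_output_def by auto
    ultimately have "card A \<le> card (Pow {0..<L})" by (intro card_inj_on_le) auto
    thus ?thesis by (simp add: card_Pow)
  qed
  have cardA2: "card A2 \<le> card A" unfolding A2_def using finA by (intro card_mono) auto
  have trm: "(if g (or_output L X S) = S then Pw p N S else 0)
       \<le> Pw p N S * t ^ card S / t powr K + (if S \<in> A2 then p powr K else 0)"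
    if S: "S \<in> Pow {0..<N}" for S
  proof -
    have nn1: "0 \<le> Pw p N S * t ^ card S / t powr K" using p t by (simp add: Pw_nonneg)
    show ?thesis
    proof (cases "real (card S) < K")
      case True
      have "t powr K \<le> t powr real (card S)" using t True by (intro powr_mono') auto
      also have "\<dots> = t ^ card S" using t by (simp add: powr_realpow)
      finally have "1 \<le> t ^ card S / t powr K" using t by simp
      hence "Pw p N S * 1 \<le> Pw p N S * (t ^ card S / t powr K)"
        using p by (intro mult_left_mono Pw_nonneg) auto
      moreover have "0 \<le> (if S \<in> A2 then p powr K else 0)" by simp
      moreover have "(if g (or_output L X S) = S then Pw p N S else 0) \<le> Pw p N S"
        using p by (simp add: Pw_nonneg)
      ultimately show ?thesis by simp
    next
      case False
      show ?thesis
      proof (cases "g (or_output L X S) = S")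
        case True
        hence "S \<in> A2" using S False unfolding A2_def A_def by auto
        have "Pw p N S \<le> p ^ card S" unfolding Pw_def using p
          by (intro mult_left_le) (auto intro: power_le_one)
        also have "\<dots> = p powr real (card S)" using p by (simp add: powr_realpow)
        also have "\<dots> \<le> p powr K" using p False by (intro powr_mono') auto
        finally show ?thesis using True \<open>S \<in> A2\<close> nn1 by simp
      next
        case False
        thus ?thesis using nn1 by simp
      qed
    qed
  qed
  have "success_prob N p L X g \<le> (\<Sum>S\<in>Pow {0..<N}. Pw p N S * t ^ card S / t powr K + (if S \<in> A2 then p powr K else 0))"
    unfolding success_prob_Pw by (intro sum_mono trm)
  also have "\<dots> = (\<Sum>S\<in>Pow {0..<N}. Pw p N S * t ^ card S) / t powr K + real (card A2) * p powr K"
  proof -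
    have "A2 \<subseteq> Pow {0..<N}" unfolding A2_def A_def by auto
    hence "(\<Sum>S\<in>Pow {0..<N}. (if S \<in> A2 then p powr K else 0)) = real (card A2) * p powr K"
      by (simp add: sum.If_cases Int_absorb1 Int_absorb2)
    thus ?thesis by (simp add: sum.distrib sum_divide_distrib)
  qed
  also have "\<dots> \<le> (p * t + (1 - p)) ^ N / t powr K + 2 ^ L * p powr K"
  proof -
    have "real (card A2) \<le> 2 ^ L" using cardA cardA2
      by (metis of_nat_le_iff of_nat_numeral of_nat_power order_trans)
    thus ?thesis unfolding gen_fun by (intro add_left_mono mult_right_mono) auto
  qed
  finally show ?thesis .
qed




lemma exp_gt_add_one: fixes x :: real assumes "x \<noteq> 0" "-2 \<le> x" shows "1 + x < exp x"
proof -
  have "1 + x / 2 \<le> exp (x / 2)" by (rule exp_ge_add_one_self)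
  moreover have "0 \<le> 1 + x / 2" using assms by simp
  ultimately have "(1 + x / 2) ^ 2 \<le> exp (x / 2) ^ 2" by (intro power_mono) auto
  also have "exp (x / 2) ^ 2 = exp x" by (simp add: power2_eq_square flip: exp_add)
  finally have "(1 + x / 2) ^ 2 \<le> exp x" .
  moreover have "1 + x < (1 + x / 2) ^ 2"
  proof -
    have "0 < x * x" using assms by (simp add: zero_less_mult_iff) (meson linorder_neqE_linordered_idom)
    thus ?thesis by (simp add: power2_eq_square field_simps)
  qed
  ultimately show ?thesis by simp
qed

lemma ln_lt_strict: fixes x :: real assumes "x \<noteq> 0" "-1 < x" shows "ln (1 + x) < x"
proof -
  have "1 + x < exp x" using exp_gt_add_one assms by simp
  hence "ln (1 + x) < ln (exp x)" using assms by (intro ln_strict_mono) auto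
  thus ?thesis by simp
qed

lemma c_ach_pos: fixes \<delta> :: real assumes "0 < \<delta>" shows "\<delta> < (1 + \<delta>) * ln (1 + \<delta>)"
proof -
  have "ln (1 + (1 / (1 + \<delta>) - 1)) < 1 / (1 + \<delta>) - 1"
    using assms by (intro ln_lt_strict) (auto simp: field_simps)
  hence "ln (1 / (1 + \<delta>)) < 1 / (1 + \<delta>) - 1" by simp
  hence "- ln (1 + \<delta>) < - \<delta> / (1 + \<delta>)" using assms by (simp add: ln_div field_simps)
  thus ?thesis using assms by (simp add: field_simps)
qed

lemma c_conv_pos: fixes \<delta> :: real assumes "0 < \<delta>" "\<delta> < 1" shows "0 < \<delta> + (1 - \<delta>) * ln (1 - \<delta>)"
proof -
  have "ln (1 + (1 / (1 - \<delta>) - 1)) < 1 / (1 - \<delta>) - 1"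
    using assms by (intro ln_lt_strict) (auto simp: field_simps)
  hence "ln (1 / (1 - \<delta>)) < 1 / (1 - \<delta>) - 1" by simp
  hence "- ln (1 - \<delta>) < \<delta> / (1 - \<delta>)" using assms by (simp add: ln_div field_simps)
  hence "- ln (1 - \<delta>) * (1 - \<delta>) < \<delta>" using assms by (simp add: field_simps)
  thus ?thesis by (simp add: algebra_simps)
qed

lemma pow_le_exp: fixes x :: real assumes "-1 \<le> x" shows "(1 + x) ^ N \<le> exp (real N * x)"
proof -
  have "(1 + x) ^ N \<le> exp x ^ N" using assms by (intro power_mono) auto
  also have "\<dots> = exp (real N * x)" by (simp add: exp_of_nat_mult)
  finally show ?thesis .
qed

lemma half_bound:
  fixes m s :: nat and K :: real
  assumes m: "2 \<le> m" and mK: "K / ln 2 \<le> real m - 1" and s: "real s \<le> K"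
  shows "1 / 2 \<le> (1 - 1 / real m) ^ s"
proof -
  have m1: "0 < real m - 1" using m by simp
  have a: "0 < 1 - 1 / real m" using m by (simp add: field_simps)
  have "ln (real m / (real m - 1)) \<le> real m / (real m - 1) - 1"
    using m1 by (intro ln_le_minus_one) simp
  also have "\<dots> = 1 / (real m - 1)" using m1 by (simp add: field_simps)
  finally have l: "ln (real m / (real m - 1)) \<le> 1 / (real m - 1)" .
  have "1 - 1 / real m = 1 / (real m / (real m - 1))" using m1 m by (simp add: field_simps)
  hence "ln (1 - 1 / real m) = - ln (real m / (real m - 1))" using m1 by (simp add: ln_div)
  hence ln1: "- 1 / (real m - 1) \<le> ln (1 - 1 / real m)" using l by simp
  have "real s / (real m - 1) \<le> K / (real m - 1)" using s m1 by (simp add: divide_right_mono)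
  also have "\<dots> \<le> ln 2" using mK m1 by (simp add: field_simps)
  finally have sl: "real s / (real m - 1) \<le> ln 2" .
  have "(1 - 1 / real m) ^ s = exp (real s * ln (1 - 1 / real m))"
    using a by (simp add: exp_of_nat_mult)
  also have "exp (real s * ln (1 - 1 / real m)) \<ge> exp (- (real s / (real m - 1)))"
  proof -
    have "real s * (- 1 / (real m - 1)) \<le> real s * ln (1 - 1 / real m)" using ln1 by (intro mult_left_mono) auto
    thus ?thesis by simp
  qed
  moreover have "exp (- (real s / (real m - 1))) \<ge> exp (- ln 2)" using sl by simp
  moreover have "exp (- ln 2) = 1 / (2::real)" by (simp add: exp_minus)
  ultimately show ?thesis by linarith
qed

lemma ach_bound:
  assumes p: "0 \<le> p" "p \<le> 1" and t: "1 \<le> t" and q: "0 \<le> q"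
    and hq: "\<And>s. real s \<le> K \<Longrightarrow> 1 - a ^ s \<le> q"
    and h0: "\<And>s. 0 \<le> 1 - a ^ s" and h1: "\<And>s. 1 - a ^ s \<le> (1::real)"
  shows "(\<Sum>S\<in>Pow {0..<N}. Pw p N S * (1 - a ^ card S) ^ w) \<le> q ^ w + (p * t + (1 - p)) ^ N / t powr K"
proof -
  have trm: "Pw p N S * (1 - a ^ card S) ^ w \<le> Pw p N S * q ^ w + Pw p N S * t ^ card S / t powr K" for S
  proof -
    have P0: "0 \<le> Pw p N S" using p by (rule Pw_nonneg)
    have n1: "0 \<le> Pw p N S * t ^ card S / t powr K" using P0 t by simp
    have n2: "0 \<le> Pw p N S * q ^ w" using P0 q by simp
    show ?thesis
    proof (cases "real (card S) \<le> K")
      case True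
      have "(1 - a ^ card S) ^ w \<le> q ^ w" using hq[OF True] h0 by (intro power_mono) auto
      hence "Pw p N S * (1 - a ^ card S) ^ w \<le> Pw p N S * q ^ w" using P0 by (intro mult_left_mono)
      thus ?thesis using n1 by simp
    next
      case False
      have "(1 - a ^ card S) ^ w \<le> 1" using h0 h1 by (intro power_le_one) auto
      hence "Pw p N S * (1 - a ^ card S) ^ w \<le> Pw p N S * 1" using P0 by (intro mult_left_mono)
      also have "\<dots> \<le> Pw p N S * (t ^ card S / t powr K)"
      proof (intro mult_left_mono P0)
        have "t powr K \<le> t powr real (card S)" using False t by (intro powr_mono) auto
        also have "\<dots> = t ^ card S" using t by (simp add: powr_realpow)
        finally show "1 \<le> t ^ card S / t powr K" using t by simp
      qed
      finally show ?thesis using n2 by simp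
    qed
  qed
  have "(\<Sum>S\<in>Pow {0..<N}. Pw p N S * (1 - a ^ card S) ^ w)
      \<le> (\<Sum>S\<in>Pow {0..<N}. Pw p N S * q ^ w + Pw p N S * t ^ card S / t powr K)"
    by (intro sum_mono trm)
  also have "\<dots> = q ^ w + (p * t + (1 - p)) ^ N / t powr K"
    by (simp add: sum.distrib sum_divide_distrib flip: sum_distrib_right gen_fun add: Pw_sum1)
  finally show ?thesis .
qed




lemma succ_le1: "0 \<le> p \<Longrightarrow> p \<le> 1 \<Longrightarrow> success_prob N p L X g \<le> 1"
proof -
  assume p: "0 \<le> p" "p \<le> 1"
  have "success_prob N p L X g \<le> (\<Sum>S\<in>Pow {0..<N}. Pw p N S)"
    unfolding success_prob_Pw by (intro sum_mono) (auto simp: Pw_nonneg p)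
  thus ?thesis by (simp add: Pw_sum1)
qed

lemma nat_ceil_le: "0 \<le> z \<Longrightarrow> real (nat \<lceil>z\<rceil>) \<le> z + 1"
proof -
  assume z: "0 \<le> z"
  hence "real (nat \<lceil>z\<rceil>) = of_int \<lceil>z\<rceil>" by (simp add: of_nat_nat)
  also have "\<dots> \<le> z + 1" using ceiling_correct[of z] by linarith
  finally show ?thesis .
qed

lemma nat_ceil_ge: "z \<le> real (nat \<lceil>z\<rceil>)"
proof (cases "0 \<le> z")
  case True
  hence "real (nat \<lceil>z\<rceil>) = of_int \<lceil>z\<rceil>" by (simp add: of_nat_nat)
  thus ?thesis using le_of_int_ceiling[of z] by simp
next
  case False
  thus ?thesis by simp
qed

lemma nat_round_ge: "0 \<le> z \<Longrightarrow> z - 1 \<le> real (nat (round z))"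
  using of_int_round_ge[of z] by (simp add: of_nat_nat)

lemma nat_round_le: "real (nat (round z)) \<le> max z 0 + 1"
  using of_int_round_le[of z] by (cases "round z \<ge> 0") (auto simp: of_nat_nat)

lemma ev_big:
  assumes b: "0 < \<beta>" and c: "0 < c1"
  shows "\<forall>\<^sub>F N in sequentially. M \<le> c1 * real N powr \<beta> \<and> M \<le> log 2 (real N) \<and> M \<le> ln (real N) \<and> 1 \<le> N"
proof -
  have "filterlim (\<lambda>N::nat. c1 * real N powr \<beta>) at_top sequentially" using b c by real_asymp
  hence 1: "\<forall>\<^sub>F N in sequentially. M \<le> c1 * real N powr \<beta>" by (simp add: filterlim_at_top)
  have "filterlim (\<lambda>N::nat. log 2 (real N)) at_top sequentially" by real_asymp
  hence 2: "\<forall>\<^sub>F N in sequentially. M \<le> log 2 (real N)" by (simp add: filterlim_at_top)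
  have "filterlim (\<lambda>N::nat. ln (real N)) at_top sequentially" by real_asymp
  hence 3: "\<forall>\<^sub>F N in sequentially. M \<le> ln (real N)" by (simp add: filterlim_at_top)
  have 4: "\<forall>\<^sub>F N in sequentially. 1 \<le> N" by (rule eventually_ge_at_top)
  show ?thesis using 1 2 3 4 by eventually_elim auto
qed

lemma lim_ach:
  assumes "0 < c" "0 < c1" "0 < \<beta>" "0 < \<delta>"
  shows "((\<lambda>N::nat. 1 - (real N * exp (- c * (c1 * real N powr \<beta>)) + real N powr (- \<delta>))) \<longlongrightarrow> 1) sequentially"
  using assms by real_asymp




lemma mw_le:
  fixes x y \<delta> \<epsilon> \<Omega> :: real
  assumes d: "0 < \<delta>" and e: "0 < \<epsilon>" and Om: "\<Omega> = (1 + \<delta>)^2 / ln 2 + \<epsilon>"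
    and x: "x \<ge> 6 * (1 + \<delta>) / \<epsilon>" "x \<ge> 9 / \<epsilon>" "x \<ge> 0"
    and y: "y \<ge> 3 * (1 + \<delta>) / (\<epsilon> * ln 2)" "y \<ge> 1"
  shows "((1 + \<delta>) * x / ln 2 + 2) * ((1 + \<delta>) * y + 1) \<le> \<Omega> * x * y - 1"
proof -
  have l2: "0 < ln (2::real)" by simp
  have a: "(1 + \<delta>) * x / ln 2 \<le> \<epsilon> * x * y / 3"
  proof -
    have "3 * (1 + \<delta>) / ln 2 \<le> \<epsilon> * y" using y(1) e l2 by (simp add: field_simps)
    hence "x * (3 * (1 + \<delta>) / ln 2) \<le> x * (\<epsilon> * y)" using x by (intro mult_left_mono) auto
    thus ?thesis by (simp add: field_simps)
  qed
  have b: "2 * (1 + \<delta>) * y \<le> \<epsilon> * x * y / 3"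
  proof -
    have "6 * (1 + \<delta>) \<le> \<epsilon> * x" using x(1) e by (simp add: field_simps)
    hence "y * (6 * (1 + \<delta>)) \<le> y * (\<epsilon> * x)" using y by (intro mult_left_mono) auto
    thus ?thesis by (simp add: field_simps)
  qed
  have c: "3 \<le> \<epsilon> * x * y / 3"
  proof -
    have "9 \<le> \<epsilon> * x" using x(2) e by (simp add: field_simps)
    also have "\<dots> \<le> \<epsilon> * x * y" 
    proof -
      have "0 \<le> \<epsilon> * x" using e x by simp
      hence "\<epsilon> * x * 1 \<le> \<epsilon> * x * y" using y(2) by (metis mult_left_mono)
      thus ?thesis by simp
    qed
    finally show ?thesis by simp
  qed
  have "((1 + \<delta>) * x / ln 2 + 2) * ((1 + \<delta>) * y + 1)
      = (1 + \<delta>)^2 / ln 2 * x * y + (1 + \<delta>) * x / ln 2 + 2 * (1 + \<delta>) * y + 2"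
    by (simp add: field_simps power2_eq_square)
  also have "\<dots> \<le> (1 + \<delta>)^2 / ln 2 * x * y + \<epsilon> * x * y - 1" using a b c by linarith
  also have "\<dots> = \<Omega> * x * y - 1" by (simp add: Om algebra_simps)
  finally show ?thesis .
qed

lemma achievability:
  fixes \<beta> c1 c2 :: real and Na :: "nat \<Rightarrow> real"
  assumes b: "0 < \<beta>" and c: "0 < c1"
    and A5: "\<And>N. N \<ge> 1 \<Longrightarrow> 0 < Na N \<and> Na N \<le> real N"
    and A6: "\<forall>\<^sub>F N in sequentially. c1 * real N powr \<beta> \<le> Na N \<and> Na N \<le> c2 * real N powr \<beta>"
    and Om: "\<Omega> > 1 / ln 2"
  shows "feasible_cost Na \<Omega>"
proof -
  have l2: "0 < ln (2::real)" by simp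
  have O1: "1 < \<Omega> * ln 2" using Om l2 by (simp add: field_simps)
  have Om0: "0 < \<Omega>" using O1 l2 by (metis less_numeral_extra(1) not_less_iff_gr_or_eq order_less_trans zero_less_mult_iff)
  define \<delta> where "\<delta> = sqrt ((1 + \<Omega> * ln 2) / 2) - 1"
  have d0: "0 < \<delta>" unfolding \<delta>_def using O1 by simp
  have d2: "(1 + \<delta>)^2 = (1 + \<Omega> * ln 2) / 2" unfolding \<delta>_def using O1 by simp
  define \<epsilon> where "\<epsilon> = \<Omega> - (1 + \<delta>)^2 / ln 2"
  have e0: "0 < \<epsilon>" unfolding \<epsilon>_def d2 using O1 l2 by (simp add: field_simps)
  have Omeq: "\<Omega> = (1 + \<delta>)^2 / ln 2 + \<epsilon>" unfolding \<epsilon>_def by simp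
  define c where "c = (1 + \<delta>) * ln (1 + \<delta>) - \<delta>"
  have c0: "0 < c" unfolding c_def using c_ach_pos[OF d0] by simp
  define p where "p N = Na N / real N" for N
  define K where "K N = (1 + \<delta>) * Na N" for N
  define m where "m N = nat \<lceil>K N / ln 2\<rceil> + 1" for N
  define w where "w N = nat \<lceil>(1 + \<delta>) * log 2 (real N)\<rceil>" for N
  define L where "L N = nat (round (\<Omega> * Na N * log 2 (real N)))" for N
  define w' where "w' N = (if m N * w N \<le> L N then w N else 0)" for N
  have p01: "0 \<le> p N \<and> p N \<le> 1" for N
  proof (cases "N = 0")
    case True thus ?thesis by (simp add: p_def)
  next
    case False
    hence "0 < Na N \<and> Na N \<le> real N" using A5 by simp
    thus ?thesis using False by (simp add: p_def)
  qed
  have "\<forall>N. \<exists>XG. 1 - success_prob N (p N) (L N) (fst XG) (snd XG)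
      \<le> real N * (\<Sum>S\<in>Pow {0..<N}. Pw (p N) N S * (1 - (1 - 1 / real (m N)) ^ card S) ^ w' N)"
  proof
    fix N
    have mw: "m N * w' N \<le> L N" unfolding w'_def by auto
    have m1: "1 \<le> m N" unfolding m_def by simp
    from exists_design[of "p N" "m N" "w' N" "L N" N, OF conjunct1[OF p01] conjunct2[OF p01] m1 mw] obtain X g where
      "1 - success_prob N (p N) (L N) X g \<le> real N * (\<Sum>S\<in>Pow {0..<N}. Pw (p N) N S * (1 - (1 - 1 / real (m N)) ^ card S) ^ w' N)"
      by blast
    thus "\<exists>XG. 1 - success_prob N (p N) (L N) (fst XG) (snd XG)
      \<le> real N * (\<Sum>S\<in>Pow {0..<N}. Pw (p N) N S * (1 - (1 - 1 / real (m N)) ^ card S) ^ w' N)"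
      by (intro exI[of _ "(X, g)"]) simp
  qed
  from choice[OF this] obtain XG where XG0: "\<forall>N. 1 - success_prob N (p N) (L N) (fst (XG N)) (snd (XG N))
      \<le> real N * (\<Sum>S\<in>Pow {0..<N}. Pw (p N) N S * (1 - (1 - 1 / real (m N)) ^ card S) ^ w' N)"
    by blast
  note XG = XG0[rule_format]
  define f where "f N = success_prob N (p N) (L N) (fst (XG N)) (snd (XG N))" for N
  have upper: "\<forall>\<^sub>F N in sequentially. f N \<le> 1"
    unfolding f_def using p01 by (intro always_eventually allI succ_le1) auto
  define M where "M = max 1 (max (6 * (1 + \<delta>) / \<epsilon>) (max (9 / \<epsilon>) (3 * (1 + \<delta>) / (\<epsilon> * ln 2))))"
  have lower: "\<forall>\<^sub>F N in sequentially.
      1 - (real N * exp (- c * (c1 * real N powr \<beta>)) + real N powr (- \<delta>)) \<le> f N"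
    using ev_big[OF b c, of M] A6
  proof eventually_elim
    case (elim N)
    have N1: "1 \<le> N" and x1: "c1 * real N powr \<beta> \<le> Na N" and x2: "M \<le> c1 * real N powr \<beta>"
      and y1: "M \<le> log 2 (real N)" using elim by auto
    have NaN: "0 < Na N" using A5 N1 by simp
    define x where "x = Na N"
    define y where "y = log 2 (real N)"
    have xM: "M \<le> x" using x1 x2 unfolding x_def by linarith
    have yM: "M \<le> y" using y1 unfolding y_def by simp
    have M1: "1 \<le> M" unfolding M_def by simp
    have y0: "0 \<le> y" using yM M1 by simp
    have K0: "0 < K N" unfolding K_def using d0 NaN by simp
    have m2: "2 \<le> m N"
    proof -
      have "0 < K N / ln 2" using K0 l2 by simp
      hence "1 \<le> \<lceil>K N / ln 2\<rceil>" by simp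
      thus ?thesis unfolding m_def by linarith
    qed
    have mreal: "K N / ln 2 \<le> real (m N) - 1" unfolding m_def using nat_ceil_ge[of "K N / ln 2"] by simp
    have mreal2: "real (m N) \<le> K N / ln 2 + 2"
    proof -
      have "real (nat \<lceil>K N / ln 2\<rceil>) \<le> K N / ln 2 + 1" using K0 l2 by (intro nat_ceil_le) simp
      thus ?thesis unfolding m_def by simp
    qed
    have wreal: "real (w N) \<le> (1 + \<delta>) * y + 1"
      unfolding w_def y_def using nat_ceil_le[of "(1 + \<delta>) * log 2 (real N)"] y0 d0 unfolding y_def by simp
    have wreal2: "(1 + \<delta>) * y \<le> real (w N)"
      unfolding w_def y_def by (rule nat_ceil_ge)
    have mwL: "m N * w N \<le> L N"
    proof -
      have "real (m N * w N) = real (m N) * real (w N)" by simp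
      also have "\<dots> \<le> (K N / ln 2 + 2) * ((1 + \<delta>) * y + 1)"
        using mreal2 wreal by (intro mult_mono) auto
      also have "\<dots> = ((1 + \<delta>) * x / ln 2 + 2) * ((1 + \<delta>) * y + 1)" unfolding K_def x_def by simp
      also have "\<dots> \<le> \<Omega> * x * y - 1"
        by (rule mw_le[OF d0 e0 Omeq]) (use xM yM M1 in \<open>auto simp: M_def\<close>)
      also have "\<dots> \<le> real (L N)" unfolding L_def x_def y_def
      proof (rule nat_round_ge)
        show "0 \<le> \<Omega> * Na N * log 2 (real N)" using Om0 NaN y0 unfolding y_def
          by (intro mult_nonneg_nonneg) auto
      qed
      finally show ?thesis by linarith
    qed
    hence ww: "w' N = w N" unfolding w'_def by simp
    have pN: "real N * p N = x" unfolding p_def x_def using N1 by simp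
    have ab: "(\<Sum>S\<in>Pow {0..<N}. Pw (p N) N S * (1 - (1 - 1 / real (m N)) ^ card S) ^ w N)
        \<le> (1/2) ^ w N + (p N * (1 + \<delta>) + (1 - p N)) ^ N / (1 + \<delta>) powr K N"
    proof (rule ach_bound)
      show "0 \<le> p N" "p N \<le> 1" using p01 by auto
      show "1 \<le> 1 + \<delta>" using d0 by simp
      show "0 \<le> (1::real) / 2" by simp
      fix s :: nat
      have a0: "0 \<le> 1 - 1 / real (m N)" and a1: "1 - 1 / real (m N) \<le> 1" using m2 by auto
      show "0 \<le> 1 - (1 - 1 / real (m N)) ^ s" using a0 a1 by (simp add: power_le_one)
      show "1 - (1 - 1 / real (m N)) ^ s \<le> 1" using a0 by simp
      assume "real s \<le> K N"
      thus "1 - (1 - 1 / real (m N)) ^ s \<le> 1 / 2" using half_bound[OF m2 mreal] by force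
    qed
    have h1: "real N * (1/2) ^ w N \<le> real N powr (- \<delta>)"
    proof -
      have Npos: "0 < real N" using N1 by simp
      have "(2::real) powr ((1 + \<delta>) * y) \<le> 2 powr real (w N)" using wreal2 by simp
      also have "\<dots> = 2 ^ w N" by (simp add: powr_realpow)
      finally have A: "2 powr ((1 + \<delta>) * y) \<le> (2::real) ^ w N" .
      have "(2::real) powr ((1 + \<delta>) * y) = 2 powr (y * (1 + \<delta>))" by (simp only: mult.commute)
      also have "\<dots> = (2 powr y) powr (1 + \<delta>)" by (rule powr_powr[symmetric])
      also have "2 powr y = real N" unfolding y_def using Npos by simp
      finally have B: "(2::real) powr ((1 + \<delta>) * y) = real N powr (1 + \<delta>)" .
      have P: "0 < real N powr (1 + \<delta>)" using Npos by simp
      have "(1/2::real) ^ w N = 1 / 2 ^ w N" by (rule power_one_over)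
      also have "\<dots> \<le> 1 / real N powr (1 + \<delta>)"
        using A B P by (intro divide_left_mono) auto
      finally have C: "(1/2::real) ^ w N \<le> 1 / real N powr (1 + \<delta>)" .
      have "real N * (1/2) ^ w N \<le> real N * (1 / real N powr (1 + \<delta>))"
        using C Npos by (intro mult_left_mono) auto
      also have "real N powr (1 + \<delta>) = real N * real N powr \<delta>"
        using Npos by (simp add: powr_add)
      also have "real N * (1 / (real N * real N powr \<delta>)) = 1 / real N powr \<delta>" using Npos by simp
      also have "\<dots> = real N powr (- \<delta>)" by (simp add: powr_minus_divide)
      finally show ?thesis .
    qed
    have h2: "(p N * (1 + \<delta>) + (1 - p N)) ^ N / (1 + \<delta>) powr K N \<le> exp (- c * (c1 * real N powr \<beta>))"
    proof -
      have "(p N * (1 + \<delta>) + (1 - p N)) ^ N = (1 + p N * \<delta>) ^ N" by (simp add: algebra_simps)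
      also have "\<dots> \<le> exp (real N * (p N * \<delta>))" using p01 d0 by (intro pow_le_exp) (auto intro: order_trans[of _ 0])
      also have "real N * (p N * \<delta>) = \<delta> * x" using pN by (simp add: algebra_simps)
      finally have n: "(p N * (1 + \<delta>) + (1 - p N)) ^ N \<le> exp (\<delta> * x)" .
      have dd: "(1 + \<delta>) powr K N = exp (K N * ln (1 + \<delta>))" using d0 by (simp add: powr_def)
      have "(p N * (1 + \<delta>) + (1 - p N)) ^ N / (1 + \<delta>) powr K N \<le> exp (\<delta> * x) / exp (K N * ln (1 + \<delta>))"
        unfolding dd using n by (intro divide_right_mono) auto
      also have "\<dots> = exp (- c * x)" unfolding c_def K_def x_def by (simp add: exp_diff[symmetric] algebra_simps)
      also have "\<dots> \<le> exp (- c * (c1 * real N powr \<beta>))" using x1 c0 unfolding x_def by simp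
      finally show ?thesis .
    qed
    have "1 - f N \<le> real N * (\<Sum>S\<in>Pow {0..<N}. Pw (p N) N S * (1 - (1 - 1 / real (m N)) ^ card S) ^ w N)"
      using XG[of N] unfolding f_def ww .
    also have "\<dots> \<le> real N * ((1/2) ^ w N + (p N * (1 + \<delta>) + (1 - p N)) ^ N / (1 + \<delta>) powr K N)"
      using ab by (intro mult_left_mono) auto
    also have "\<dots> \<le> real N powr (- \<delta>) + real N * exp (- c * (c1 * real N powr \<beta>))"
    proof -
      have "real N * ((p N * (1 + \<delta>) + (1 - p N)) ^ N / (1 + \<delta>) powr K N) \<le> real N * exp (- c * (c1 * real N powr \<beta>))"
        using h2 by (intro mult_left_mono) auto
      thus ?thesis using h1 by (simp only: distrib_left)
    qed
    finally show ?case by simp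
  qed
  have "f \<longlonglongrightarrow> 1"
    by (rule tendsto_sandwich[OF lower upper lim_ach[OF c0 c b d0] tendsto_const])
  hence "(\<lambda>N. success_prob N (Na N / real N) (nat (round (\<Omega> * Na N * log 2 (real N))))
                ((\<lambda>N. fst (XG N)) N) ((\<lambda>N. snd (XG N)) N)) \<longlonglongrightarrow> 1"
    unfolding f_def p_def L_def by simp
  thus ?thesis unfolding feasible_cost_def by (intro exI)
qed




lemma lim_conv:
  assumes "0 < c" "0 < c1" "0 < \<beta>" "0 < \<gamma>"
  shows "((\<lambda>N::nat. exp (- c * (c1 * real N powr \<beta>)) + 2 * exp (- (\<gamma> / 2) * (c1 * real N powr \<beta>))) \<longlongrightarrow> 0) sequentially"
proof -
  have 1: "((\<lambda>N::nat. exp (- c * (c1 * real N powr \<beta>))) \<longlongrightarrow> 0) sequentially"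
    using assms by real_asymp
  have 2: "((\<lambda>N::nat. exp (- (\<gamma> / 2) * (c1 * real N powr \<beta>))) \<longlongrightarrow> 0) sequentially"
    using assms by real_asymp
  have "((\<lambda>N::nat. exp (- c * (c1 * real N powr \<beta>)) + 2 * exp (- (\<gamma> / 2) * (c1 * real N powr \<beta>))) \<longlongrightarrow> 0 + 2 * 0) sequentially"
    by (intro tendsto_add tendsto_mult 1 2 tendsto_const)
  thus ?thesis by simp
qed

lemma converse:
  fixes \<beta> c1 c2 :: real and Na :: "nat \<Rightarrow> real"
  assumes b: "0 < \<beta>" "\<beta> < 1" and c: "0 < c1" "c1 \<le> c2"
    and A5: "\<And>N. N \<ge> 1 \<Longrightarrow> 0 < Na N \<and> Na N \<le> real N"
    and A6: "\<forall>\<^sub>F N in sequentially. c1 * real N powr \<beta> \<le> Na N \<and> Na N \<le> c2 * real N powr \<beta>"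
    and F: "feasible_cost Na \<Omega>"
  shows "1 - \<beta> \<le> \<Omega>"
proof (rule ccontr)
  assume "\<not> 1 - \<beta> \<le> \<Omega>"
  hence Om: "\<Omega> < 1 - \<beta>" by simp
  define \<Omega>' where "\<Omega>' = max \<Omega> 0"
  have O'0: "0 \<le> \<Omega>'" and O'1: "\<Omega>' < 1 - \<beta>" unfolding \<Omega>'_def using Om b by auto
  define \<delta> where "\<delta> = (1 - \<beta> - \<Omega>') / (2 * (1 - \<beta>))"
  define \<gamma> where "\<gamma> = (1 - \<beta> - \<Omega>') / 2"
  have d0: "0 < \<delta>" and d1: "\<delta> < 1" unfolding \<delta>_def using O'0 O'1 b by (auto simp: field_simps)
  have g0: "0 < \<gamma>" unfolding \<gamma>_def using O'1 by simp
  have dg: "(1 - \<delta>) * (1 - \<beta>) = \<Omega>' + \<gamma>" unfolding \<delta>_def \<gamma>_def using b by (simp add: field_simps)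
  define c' where "c' = \<delta> + (1 - \<delta>) * ln (1 - \<delta>)"
  have c'0: "0 < c'" unfolding c'_def using c_conv_pos[OF d0 d1] .
  have c20: "0 < c2" using c by simp
  define p where "p N = Na N / real N" for N
  define L where "L N = nat (round (\<Omega> * Na N * log 2 (real N)))" for N
  from F obtain X g where lim1: "(\<lambda>N. success_prob N (p N) (L N) (X N) (g N)) \<longlonglongrightarrow> 1"
    unfolding feasible_cost_def p_def L_def by blast
  define M where "M = max 1 (2 * \<bar>ln c2\<bar> / \<gamma>)"
  have bound: "\<forall>\<^sub>F N in sequentially. success_prob N (p N) (L N) (X N) (g N)
     \<le> exp (- c' * (c1 * real N powr \<beta>)) + 2 * exp (- (\<gamma> / 2) * (c1 * real N powr \<beta>))"
    using ev_big[OF b(1) c(1), of M] A6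
  proof eventually_elim
    case (elim N)
    have N1: "1 \<le> N" and x1: "c1 * real N powr \<beta> \<le> Na N" and x2: "Na N \<le> c2 * real N powr \<beta>"
      and lnM: "M \<le> ln (real N)" using elim by auto
    have NaN: "0 < Na N" and NaN2: "Na N \<le> real N" using A5 N1 by auto
    define x where "x = Na N"
    have x0: "0 < x" using NaN x_def by simp
    have p0: "0 < p N" and p1: "p N \<le> 1" unfolding p_def using NaN NaN2 N1 by auto
    have pN: "real N * p N = x" unfolding p_def x_def using N1 by simp
    define K where "K = (1 - \<delta>) * x"
    have K0: "0 \<le> K" unfolding K_def using d1 x0 by simp
    have cb: "success_prob N (p N) (L N) (X N) (g N)
        \<le> (p N * (1 - \<delta>) + (1 - p N)) ^ N / (1 - \<delta>) powr K + 2 ^ L N * p N powr K"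
      by (rule converse_bound[OF p0 p1 _ _ K0]) (use d0 d1 in auto)
    have t1: "(p N * (1 - \<delta>) + (1 - p N)) ^ N / (1 - \<delta>) powr K \<le> exp (- c' * (c1 * real N powr \<beta>))"
    proof -
      have "(p N * (1 - \<delta>) + (1 - p N)) ^ N = (1 + - (p N * \<delta>)) ^ N" by (simp add: algebra_simps)
      also have "\<dots> \<le> exp (real N * (- (p N * \<delta>)))"
      proof (rule pow_le_exp)
        have "p N * \<delta> \<le> 1 * 1" using p0 p1 d0 d1 by (intro mult_mono) auto
        thus "-1 \<le> - (p N * \<delta>)" by simp
      qed
      also have "real N * (- (p N * \<delta>)) = - \<delta> * x" using pN by (simp add: algebra_simps)
      finally have n: "(p N * (1 - \<delta>) + (1 - p N)) ^ N \<le> exp (- \<delta> * x)" .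
      have dd: "(1 - \<delta>) powr K = exp (K * ln (1 - \<delta>))" using d1 by (simp add: powr_def)
      have "(p N * (1 - \<delta>) + (1 - p N)) ^ N / (1 - \<delta>) powr K \<le> exp (- \<delta> * x) / exp (K * ln (1 - \<delta>))"
        unfolding dd using n by (intro divide_right_mono) auto
      also have "\<dots> = exp (- c' * x)" unfolding c'_def K_def by (simp add: exp_diff[symmetric] algebra_simps)
      also have "\<dots> \<le> exp (- c' * (c1 * real N powr \<beta>))" using x1 c'0 unfolding x_def by simp
      finally show ?thesis .
    qed
    have t2: "2 ^ L N * p N powr K \<le> 2 * exp (- (\<gamma> / 2) * (c1 * real N powr \<beta>))"
    proof -
      define y where "y = log 2 (real N)"
      have lnN: "ln (real N) = y * ln 2" unfolding y_def using N1 by (simp add: log_def)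
      have y0: "0 \<le> y" unfolding y_def using N1 by simp
      have Lr: "real (L N) \<le> \<Omega>' * x * y + 1"
      proof -
        have "real (L N) \<le> max (\<Omega> * x * y) 0 + 1" unfolding L_def x_def y_def by (rule nat_round_le)
        moreover have "max (\<Omega> * x * y) 0 = \<Omega>' * x * y"
        proof (cases "\<Omega> \<le> 0")
          case True
          have "\<Omega> * (x * y) \<le> 0" using True x0 y0 by (intro mult_nonpos_nonneg) auto
          thus ?thesis unfolding \<Omega>'_def using True by (simp add: mult.assoc)
        next
          case False
          have "0 \<le> \<Omega> * (x * y)" using False x0 y0 by (intro mult_nonneg_nonneg) auto
          thus ?thesis unfolding \<Omega>'_def using False by (simp add: mult.assoc)
        qed
        ultimately show ?thesis by simp
      qed
      have "2 ^ L N = (2::real) powr real (L N)" by (simp add: powr_realpow)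
      also have "\<dots> \<le> 2 powr (\<Omega>' * x * y + 1)" using Lr by simp
      also have "\<dots> = 2 * exp (\<Omega>' * x * ln (real N))" by (simp add: powr_def lnN algebra_simps exp_add)
      finally have e1: "2 ^ L N \<le> 2 * exp (\<Omega>' * x * ln (real N))" .
      have lp: "ln (p N) \<le> ln c2 - (1 - \<beta>) * ln (real N)"
      proof -
        have "p N \<le> c2 * real N powr \<beta> / real N" unfolding p_def using x2 N1 by (simp add: divide_right_mono)
        hence "ln (p N) \<le> ln (c2 * real N powr \<beta> / real N)" using p0 by (intro ln_mono) auto
        also have "\<dots> = ln c2 + \<beta> * ln (real N) - ln (real N)" using c20 N1
          by (simp add: ln_div ln_mult ln_powr)
        finally show ?thesis by (simp add: algebra_simps)
      qed
      have "p N powr K = exp (K * ln (p N))" using p0 by (simp add: powr_def)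
      also have "\<dots> \<le> exp (K * (ln c2 - (1 - \<beta>) * ln (real N)))" using lp K0 by (simp add: mult_left_mono)
      finally have e2: "p N powr K \<le> exp (K * (ln c2 - (1 - \<beta>) * ln (real N)))" .
      have "2 ^ L N * p N powr K \<le> 2 * exp (\<Omega>' * x * ln (real N)) * exp (K * (ln c2 - (1 - \<beta>) * ln (real N)))"
        using e1 e2 by (intro mult_mono) auto
      also have "\<dots> = 2 * exp (x * ((1 - \<delta>) * ln c2 - \<gamma> * ln (real N)))"
      proof -
        have "\<Omega>' * x * ln (real N) + K * (ln c2 - (1 - \<beta>) * ln (real N))
            = x * ((1 - \<delta>) * ln c2 - ((1 - \<delta>) * (1 - \<beta>) - \<Omega>') * ln (real N))"
          unfolding K_def by (simp add: algebra_simps)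
        also have "\<dots> = x * ((1 - \<delta>) * ln c2 - \<gamma> * ln (real N))" using dg by simp
        finally show ?thesis by (simp add: mult.assoc flip: exp_add)
      qed
      also have "\<dots> \<le> 2 * exp (- (\<gamma> / 2) * (c1 * real N powr \<beta>))"
      proof -
        have M1: "1 \<le> ln (real N)" and M2: "2 * \<bar>ln c2\<bar> / \<gamma> \<le> ln (real N)" using lnM unfolding M_def by auto
        have "(1 - \<delta>) * ln c2 \<le> \<bar>ln c2\<bar>"
        proof -
          have "(1 - \<delta>) * ln c2 \<le> \<bar>(1 - \<delta>) * ln c2\<bar>" by simp
          also have "\<dots> = (1 - \<delta>) * \<bar>ln c2\<bar>" using d1 by (simp add: abs_mult)
          also have "\<dots> \<le> 1 * \<bar>ln c2\<bar>" using d0 by (intro mult_right_mono) auto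
          finally show ?thesis by simp
        qed
        moreover have "\<bar>ln c2\<bar> \<le> \<gamma> / 2 * ln (real N)" using M2 g0 by (simp add: field_simps)
        ultimately have "(1 - \<delta>) * ln c2 - \<gamma> * ln (real N) \<le> - (\<gamma> / 2) * ln (real N)" by simp
        also have "\<dots> \<le> - (\<gamma> / 2)" using M1 g0 by simp
        finally have ee: "(1 - \<delta>) * ln c2 - \<gamma> * ln (real N) \<le> - (\<gamma> / 2)" .
        have "x * ((1 - \<delta>) * ln c2 - \<gamma> * ln (real N)) \<le> x * (- (\<gamma> / 2))"
          using ee x0 by (intro mult_left_mono) auto
        also have "\<dots> \<le> - (\<gamma> / 2) * (c1 * real N powr \<beta>)" using x1 g0 unfolding x_def by simp
        finally show ?thesis by simp
      qed
      finally show ?thesis .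
    qed
    show ?case using cb t1 t2 by linarith
  qed
  have "1 \<le> (0::real)"
    by (rule tendsto_le[OF _ lim_conv[OF c'0 c(1) b(1) g0] lim1 bound]) simp
  thus False by simp
qed

theorem proposition3:
  fixes \<beta> c1 c2 :: real and Na :: "nat \<Rightarrow> real"
  assumes "0 < \<beta>" "\<beta> < 1"
    and "0 < c1" "c1 \<le> c2"
    and "\<And>N. N \<ge> 1 \<Longrightarrow> 0 < Na N \<and> Na N \<le> real N"
    and "\<forall>\<^sub>F N in sequentially. c1 * real N powr \<beta> \<le> Na N \<and> Na N \<le> c2 * real N powr \<beta>"
  shows "(\<forall>\<Omega>. feasible_cost Na \<Omega> \<longrightarrow> \<Omega> \<ge> 1 - \<beta>)
       \<and> (\<forall>\<Omega>. \<Omega> > 1 / ln 2 \<longrightarrow> feasible_cost Na \<Omega>)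
       \<and> Inf {\<Omega>. feasible_cost Na \<Omega>} \<in> {1 - \<beta> .. 1 / ln 2}"
proof -
  have conv: "\<forall>\<Omega>. feasible_cost Na \<Omega> \<longrightarrow> \<Omega> \<ge> 1 - \<beta>"
    using converse[OF assms] by blast
  have ach: "\<forall>\<Omega>. \<Omega> > 1 / ln 2 \<longrightarrow> feasible_cost Na \<Omega>"
    using achievability[OF assms(1) assms(3) assms(5) assms(6)] by blast
  define F where "F = {\<Omega>. feasible_cost Na \<Omega>}"
  have ne: "1 / ln 2 + 1 \<in> F" unfolding F_def using ach by simp
  hence ne': "F \<noteq> {}" by auto
  have bdd: "bdd_below F" unfolding F_def using conv by (intro bdd_belowI[of _ "1 - \<beta>"]) auto
  have lo: "1 - \<beta> \<le> Inf F" using ne' conv unfolding F_def by (intro cInf_greatest) auto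
  have hi: "Inf F \<le> 1 / ln 2"
  proof (rule field_le_epsilon)
    fix e :: real assume e: "0 < e"
    have "1 / ln 2 + e \<in> F" unfolding F_def using ach e by simp
    thus "Inf F \<le> 1 / ln 2 + e" using bdd by (rule cInf_lower)
  qed
  show ?thesis using conv ach lo hi unfolding F_def by auto
qed


end
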